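(* For every positive integer $q$, \[ L_s(2,q) = 2^{q(q-1)} N_s(q) - 1 \quad\text{and}\quad L_e(2,q) = 2^{q(q-1)} N_e(q). \]
   Context: All graphs are simple undirected labeled graphs on the vertex set $\{1,\dots,n\}$. For such a graph with adjacency matrix $W$ and degree matrix $D$, its Laplacian is $L = D - W$; if the graph has at least one edge, its normalized Laplacian matrix is $\frac{1}{\mathrm{Tr}(L)}L$, which is a density matrix (Hermitian, positive semidefinite, trace $1$). An $n\times n$ density matrix $\rho$ with $n=pq$ is separable in $\mathbb{C}^p\otimes\mathbb{C}^q$ if $\rho=\sum_i c_i\,\rho_i\otimes\eta_i$ (finite sum) where the $\rho_i$ are $p\times p$ density matrices, the $\eta_i$ are $q\times q$ density matrices, $c_i\ge 0$ and $\sum_i c_i=1$; otherwise it is entangled. $L_s(p,q)$ denotes the number of labeled graphs on $n=pq$ vertices with at least one edge whose normalized Laplacian matrix is separable in $\mathbb{C}^p\otimes\mathbb{C}^q$, and $L_e(p,q)$ the number of those whose normalized Laplacian is entangled; thus $L_s(p,q)+L_e(p,q)=L(pq):=2^{pq(pq-1)/2}-1$. A square matrix is line sum symmetric if for each $i$ its $i$-th row sum equals its $i$-th column sum. $N_s(n)$ denotes the number of $n\times n$ matrices with entries in $\{0,1\}$ that are line sum symmetric, and $N_e(n)=2^{n^2}-N_s(n)$ the number of $n\times n$ $0$-$1$ matrices that are not line sum symmetric. *)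

theory Defs
  imports Complex_Main "HOL-Library.FuncSet"
begin

text \<open>Square complex matrices of dimension d are represented as functions
  nat \<Rightarrow> nat \<Rightarrow> complex; only entries with indices below d matter.
  Vertices/indices are 0-based: vertex i of the paper corresponds to index i-1.\<close>

type_synonym cmat = "nat \<Rightarrow> nat \<Rightarrow> complex"

definition mat_eq :: "nat \<Rightarrow> cmat \<Rightarrow> cmat \<Rightarrow> bool" where
  "mat_eq d A B \<longleftrightarrow> (\<forall>i<d. \<forall>j<d. A i j = B i j)"

definition hermitian_mat :: "nat \<Rightarrow> cmat \<Rightarrow> bool" where
  "hermitian_mat d A \<longleftrightarrow> (\<forall>i<d. \<forall>j<d. A i j = cnj (A j i))"

definition psd_mat :: "nat \<Rightarrow> cmat \<Rightarrow> bool" where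
  "psd_mat d A \<longleftrightarrow> (\<forall>v :: nat \<Rightarrow> complex.
      0 \<le> Re (\<Sum>i<d. \<Sum>j<d. cnj (v i) * A i j * v j))"

definition mat_trace :: "nat \<Rightarrow> cmat \<Rightarrow> complex" where
  "mat_trace d A = (\<Sum>i<d. A i i)"

definition density_mat :: "nat \<Rightarrow> cmat \<Rightarrow> bool" where
  "density_mat d A \<longleftrightarrow> hermitian_mat d A \<and> psd_mat d A \<and> mat_trace d A = 1"

definition kron :: "nat \<Rightarrow> cmat \<Rightarrow> cmat \<Rightarrow> cmat" where
  "kron q A B = (\<lambda>i j. A (i div q) (j div q) * B (i mod q) (j mod q))"

definition separable :: "nat \<Rightarrow> nat \<Rightarrow> cmat \<Rightarrow> bool" where
  "separable p q \<rho> \<longleftrightarrow> (\<exists>(m::nat) (c::nat \<Rightarrow> real) (R::nat \<Rightarrow> cmat) (H::nat \<Rightarrow> cmat).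
      (\<forall>k<m. c k \<ge> 0 \<and> density_mat p (R k) \<and> density_mat q (H k)) \<and>
      (\<Sum>k<m. c k) = 1 \<and>
      mat_eq (p*q) \<rho> (\<lambda>i j. \<Sum>k<m. complex_of_real (c k) * kron q (R k) (H k) i j))"

text \<open>Simple graphs on vertex set {0..<n}: sets of 2-element subsets.\<close>
definition all_edges :: "nat \<Rightarrow> nat set set" where
  "all_edges n = {{i, j} | i j. i < n \<and> j < n \<and> i \<noteq> j}"

definition degree :: "nat set set \<Rightarrow> nat \<Rightarrow> nat" where
  "degree E i = card {e \<in> E. i \<in> e}"

definition laplacian :: "nat set set \<Rightarrow> cmat" where
  "laplacian E = (\<lambda>i j. if i = j then of_nat (degree E i)
                        else if {i, j} \<in> E then -1 else 0)"

definition norm_laplacian :: "nat \<Rightarrow> nat set set \<Rightarrow> cmat" where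
  "norm_laplacian n E = (\<lambda>i j. laplacian E i j / mat_trace n (laplacian E))"

definition L_s :: "nat \<Rightarrow> nat \<Rightarrow> nat" where
  "L_s p q = card {E. E \<subseteq> all_edges (p*q) \<and> E \<noteq> {} \<and>
                      separable p q (norm_laplacian (p*q) E)}"

definition L_e :: "nat \<Rightarrow> nat \<Rightarrow> nat" where
  "L_e p q = card {E. E \<subseteq> all_edges (p*q) \<and> E \<noteq> {} \<and>
                      \<not> separable p q (norm_laplacian (p*q) E)}"

definition line_sum_symmetric :: "nat \<Rightarrow> (nat \<times> nat \<Rightarrow> nat) \<Rightarrow> bool" where
  "line_sum_symmetric n M \<longleftrightarrow> (\<forall>i<n. (\<Sum>j<n. M (i, j)) = (\<Sum>j<n. M (j, i)))"

definition zero_one_mats :: "nat \<Rightarrow> (nat \<times> nat \<Rightarrow> nat) set" where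
  "zero_one_mats n = ({..<n} \<times> {..<n}) \<rightarrow>\<^sub>E {0, 1}"

definition N_s :: "nat \<Rightarrow> nat" where
  "N_s n = card {M \<in> zero_one_mats n. line_sum_symmetric n M}"

definition N_e :: "nat \<Rightarrow> nat" where
  "N_e n = 2 ^ (n^2) - N_s n"

end

theory Submission
  imports Defs "HOL-Combinatorics.Permutations" "HOL-Combinatorics.Cycles"
begin



definition outer :: "(nat \<Rightarrow> complex) \<Rightarrow> cmat" where
  "outer x = (\<lambda>i j. x i * cnj (x j))"

definition pv :: "nat \<Rightarrow> (nat \<Rightarrow> complex) \<Rightarrow> (nat \<Rightarrow> complex) \<Rightarrow> nat \<Rightarrow> complex" where
  "pv q x y = (\<lambda>i. x (i div q) * y (i mod q))"

lemma aqb_less: "a < (p::nat) \<Longrightarrow> b < q \<Longrightarrow> a*q+b < p*q"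
proof -
  assume "a < p" "b < q"
  have "a*q+b < a*q+q" using \<open>b<q\<close> by simp
  also have "\<dots> = Suc a * q" by simp
  also have "\<dots> \<le> p*q" using \<open>a<p\<close> Suc_leI mult_le_mono1 by blast
  finally show ?thesis .
qed

lemma sum_divmod:
  fixes f :: "nat \<Rightarrow> nat \<Rightarrow> 'a::comm_monoid_add"
  assumes "q > 0"
  shows "(\<Sum>i<p*q. f (i div q) (i mod q)) = (\<Sum>a<p. \<Sum>b<q. f a b)"
proof -
  have "(\<Sum>a<p. \<Sum>b<q. f a b) = (\<Sum>(a,b)\<in>{..<p}\<times>{..<q}. f a b)"
    by (simp add: sum.cartesian_product)
  also have "\<dots> = (\<Sum>i<p*q. f (i div q) (i mod q))"
    apply (rule sum.reindex_bij_witness[of _ "\<lambda>i. (i div q, i mod q)" "\<lambda>(a,b). a*q+b"])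
    using assms by (auto simp: less_mult_imp_div_less aqb_less)
  finally show ?thesis by simp
qed




inductive pcone :: "nat \<Rightarrow> nat \<Rightarrow> cmat \<Rightarrow> bool" for p q where
  pc0: "pcone p q (\<lambda>i j. 0)"
| pcS: "pcone p q M \<Longrightarrow> pcone p q (\<lambda>i j. M i j + outer (pv q x y) i j)"
| pcEq: "pcone p q M \<Longrightarrow> mat_eq (p*q) M M' \<Longrightarrow> pcone p q M'"

lemma pcone_gen: "pcone p q (outer (pv q x y))"
  using pcS[OF pc0, where x=x and y=y] by simp

lemma pcone_add: "pcone p q M' \<Longrightarrow> pcone p q M \<Longrightarrow> pcone p q (\<lambda>i j. M i j + M' i j)"
proof (induction M' rule: pcone.induct)
  case pc0
  then show ?case by simp
next
  case (pcS M' x y)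
  then have "pcone p q (\<lambda>i j. M i j + M' i j)" by simp
  from pcone.pcS[OF this, where x=x and y=y]
  have "pcone p q (\<lambda>i j. (M i j + M' i j) + outer (pv q x y) i j)" .
  then show ?case by (simp add: add.assoc)
next
  case (pcEq M1 M2)
  have "mat_eq (p*q) (\<lambda>i j. M i j + M1 i j) (\<lambda>i j. M i j + M2 i j)"
    using pcEq(2) by (simp add: mat_eq_def)
  then show ?case by (rule pcone.pcEq[OF pcEq(3)[OF pcEq(4)]])
qed

lemma pcone_scale: "pcone p q M \<Longrightarrow> c \<ge> 0 \<Longrightarrow> pcone p q (\<lambda>i j. complex_of_real c * M i j)"
proof (induction M rule: pcone.induct)
  case pc0
  have "mat_eq (p*q) (\<lambda>i j. 0) (\<lambda>i j. complex_of_real c * 0)" by (simp add: mat_eq_def)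
  then show ?case by (rule pcone.pcEq[OF pcone.pc0])
next
  case (pcS M x y)
  have e: "outer (pv q x (\<lambda>b. complex_of_real (sqrt c) * y b)) i j = complex_of_real c * outer (pv q x y) i j" for i j
  proof -
    have s: "complex_of_real (sqrt c) * cnj (complex_of_real (sqrt c)) = complex_of_real c"
    proof -
      have "sqrt c * sqrt c = c" using pcS.prems by simp
      then show ?thesis unfolding complex_cnj_complex_of_real of_real_mult[symmetric] by simp
    qed
    have "outer (pv q x (\<lambda>b. complex_of_real (sqrt c) * y b)) i j =
       (complex_of_real (sqrt c) * cnj (complex_of_real (sqrt c))) * outer (pv q x y) i j"
      unfolding outer_def pv_def complex_cnj_mult by (simp only: mult_ac)
    then show ?thesis using s by simp
  qed
  have h1: "pcone p q (\<lambda>i j. complex_of_real c * M i j)" using pcS.IH[OF pcS.prems] .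
  have h2: "pcone p q (\<lambda>i j. complex_of_real c * M i j + outer (pv q x (\<lambda>b. complex_of_real (sqrt c) * y b)) i j)"
    by (rule pcone.pcS[OF h1])
  have "mat_eq (p*q) (\<lambda>i j. complex_of_real c * M i j + outer (pv q x (\<lambda>b. complex_of_real (sqrt c) * y b)) i j)
      (\<lambda>i j. complex_of_real c * (M i j + outer (pv q x y) i j))"
    unfolding mat_eq_def e by (simp add: distrib_left)
  then show ?case by (rule pcone.pcEq[OF h2])
next
  case (pcEq M M')
  have "mat_eq (p*q) (\<lambda>i j. complex_of_real c * M i j) (\<lambda>i j. complex_of_real c * M' i j)"
    using pcEq(2) by (simp add: mat_eq_def)
  then show ?case by (rule pcone.pcEq[OF pcEq(3)[OF pcEq(4)]])
qed

lemma pcone_sum: "finite S \<Longrightarrow> (\<And>s. s \<in> S \<Longrightarrow> pcone p q (F s)) \<Longrightarrow> pcone p q (\<lambda>i j. \<Sum>s\<in>S. F s i j)"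
proof (induction S rule: finite_induct)
  case empty
  then show ?case by (simp add: pcone.pc0)
next
  case (insert s S)
  have a: "pcone p q (\<lambda>i j. F s i j)" using insert.prems by simp
  have b: "pcone p q (\<lambda>i j. \<Sum>s\<in>S. F s i j)" by (rule insert.IH) (simp add: insert.prems)
  have "pcone p q (\<lambda>i j. (\<Sum>s\<in>S. F s i j) + F s i j)"
    by (rule pcone_add[OF a b])
  moreover have "(\<lambda>i j. \<Sum>s\<in>insert s S. F s i j) = (\<lambda>i j. (\<Sum>s\<in>S. F s i j) + F s i j)"
    using insert(1,2) by (simp add: add.commute)
  ultimately show ?case by simp
qed

lemma outer_herm: "hermitian_mat d (outer x)"
  by (simp add: hermitian_mat_def outer_def)

lemma outer_quad: "(\<Sum>i<d. \<Sum>j<d. cnj (v i) * outer x i j * v j) =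
   (\<Sum>i<d. cnj (v i) * x i) * cnj (\<Sum>j<d. cnj (v j) * x j)"
proof -
  have "(\<Sum>i<d. \<Sum>j<d. cnj (v i) * outer x i j * v j) =
        (\<Sum>i<d. \<Sum>j<d. (cnj (v i) * x i) * (cnj (x j) * v j))"
    unfolding outer_def by (simp only: mult_ac)
  also have "\<dots> = (\<Sum>i<d. cnj (v i) * x i) * (\<Sum>j<d. cnj (x j) * v j)"
    by (simp only: sum_product)
  also have "(\<Sum>j<d. cnj (x j) * v j) = cnj (\<Sum>j<d. cnj (v j) * x j)"
    by (simp add: mult.commute)
  finally show ?thesis .
qed

lemma outer_psd: "psd_mat d (outer x)"
  unfolding psd_mat_def outer_quad by (simp only: complex_mult_cnj Re_complex_of_real) simp

lemma outer_trace: "mat_trace d (outer x) = complex_of_real (\<Sum>i<d. (cmod (x i))^2)"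
  by (simp only: mat_trace_def outer_def complex_mult_cnj of_real_sum) (simp add: cmod_power2)
lemma density_scale:
  assumes "hermitian_mat d M" "psd_mat d M" "mat_trace d M = complex_of_real t" "t > 0"
  shows "density_mat d (\<lambda>i j. M i j / complex_of_real t)"
proof -
  have h: "hermitian_mat d (\<lambda>i j. M i j / complex_of_real t)"
  proof (unfold hermitian_mat_def, intro allI impI)
    fix i j assume "i < d" "j < d"
    then have "M i j = cnj (M j i)" using assms(1) unfolding hermitian_mat_def by blast
    then show "M i j / complex_of_real t = cnj (M j i / complex_of_real t)"
      by (simp only: complex_cnj_divide complex_cnj_complex_of_real)
  qed
  have p: "psd_mat d (\<lambda>i j. M i j / complex_of_real t)"
    unfolding psd_mat_def
  proof
    fix v :: "nat \<Rightarrow> complex"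
    have e1: "cnj (v i) * (M i j / complex_of_real t) * v j = cnj (v i) * M i j * v j / complex_of_real t" for i j
      by simp
    have "(\<Sum>i<d. \<Sum>j<d. cnj (v i) * (M i j / complex_of_real t) * v j) =
          (\<Sum>i<d. \<Sum>j<d. cnj (v i) * M i j * v j) / complex_of_real t"
      by (simp only: e1 sum_divide_distrib)
    moreover have "0 \<le> Re (\<Sum>i<d. \<Sum>j<d. cnj (v i) * M i j * v j)"
      using assms(2) unfolding psd_mat_def by blast
    ultimately show "0 \<le> Re (\<Sum>i<d. \<Sum>j<d. cnj (v i) * (M i j / complex_of_real t) * v j)"
      using assms(4) by (simp only: Re_divide_of_real) simp
  qed
  have tr: "mat_trace d (\<lambda>i j. M i j / complex_of_real t) = 1"
    using assms(3,4) unfolding mat_trace_def sum_divide_distrib[symmetric] by simp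
  show ?thesis using h p tr unfolding density_mat_def by blast
qed

lemma outer_pv_kron: "outer (pv q x y) i j = kron q (outer x) (outer y) i j"
  by (simp add: outer_def pv_def kron_def mult_ac)

lemma sumsq_zero:
  assumes "(\<Sum>i<(d::nat). (cmod (x i))^2) = 0" "i < d"
  shows "x i = 0"
proof -
  have "\<forall>i\<in>{..<d}. (cmod (x i))^2 = 0"
    using assms(1) by (subst (asm) sum_nonneg_eq_0_iff) auto
  then show ?thesis using assms(2) by auto
qed

lemma scal_cancel:
  fixes A B :: complex
  shows "t > 0 \<Longrightarrow> s > 0 \<Longrightarrow> complex_of_real (t*s) * (A / complex_of_real t * (B / complex_of_real s)) = A * B"
  by (simp add: field_simps)

lemma pcone_repr:
  assumes "pcone p q M" "q > 0"
  shows "\<exists>(m::nat) c R H. (\<forall>k<m. c k \<ge> 0 \<and> density_mat p (R k) \<and> density_mat q (H k)) \<and>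
      mat_eq (p*q) M (\<lambda>i j. \<Sum>k<m. complex_of_real (c k) * kron q (R k) (H k) i j)"
  using assms(1)
proof (induction M rule: pcone.induct)
  case pc0
  show ?case by (rule exI[of _ "0::nat"]) (simp add: mat_eq_def)
next
  case (pcS M x y)
  then obtain m :: nat and c R H where mc: "\<forall>k<m. c k \<ge> 0 \<and> density_mat p (R k) \<and> density_mat q (H k)"
    and eq: "mat_eq (p*q) M (\<lambda>i j. \<Sum>k<m. complex_of_real (c k) * kron q (R k) (H k) i j)" by blast
  define tx where "tx = (\<Sum>i<p. (cmod (x i))^2)"
  define ty where "ty = (\<Sum>i<q. (cmod (y i))^2)"
  have tx0: "tx \<ge> 0" and ty0: "ty \<ge> 0" unfolding tx_def ty_def by (auto intro: sum_nonneg)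
  show ?case
  proof (cases "tx = 0 \<or> ty = 0")
    case True
    have z: "outer (pv q x y) i j = 0" if "i < p*q" "j < p*q" for i j
    proof (cases "tx = 0")
      case True
      have "i div q < p" using that assms(2) by (simp add: less_mult_imp_div_less)
      then show ?thesis using sumsq_zero[of x p "i div q"] True tx_def by (simp add: outer_def pv_def)
    next
      case False
      then have "ty = 0" using \<open>tx = 0 \<or> ty = 0\<close> by simp
      have "i mod q < q" using assms(2) by simp
      then show ?thesis using sumsq_zero[of y q "i mod q"] \<open>ty = 0\<close> ty_def by (simp add: outer_def pv_def)
    qed
    show ?thesis
      apply (rule exI[of _ m], rule exI[of _ c], rule exI[of _ R], rule exI[of _ H])
      using mc eq z by (simp add: mat_eq_def)
  next
    case False
    then have txp: "tx > 0" and tyP: "ty > 0" using tx0 ty0 by auto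
    define c' where "c' = c(m := tx * ty)"
    define R' where "R' = R(m := (\<lambda>i j. outer x i j / complex_of_real tx))"
    define H' where "H' = H(m := (\<lambda>i j. outer y i j / complex_of_real ty))"
    have dR: "density_mat p (\<lambda>i j. outer x i j / complex_of_real tx)"
      by (rule density_scale[OF outer_herm outer_psd _ txp]) (simp add: outer_trace tx_def)
    have dH: "density_mat q (\<lambda>i j. outer y i j / complex_of_real ty)"
      by (rule density_scale[OF outer_herm outer_psd _ tyP]) (simp add: outer_trace ty_def)
    have P: "\<forall>k<Suc m. c' k \<ge> 0 \<and> density_mat p (R' k) \<and> density_mat q (H' k)"
    proof (intro allI impI)
      fix k assume "k < Suc m"
      show "c' k \<ge> 0 \<and> density_mat p (R' k) \<and> density_mat q (H' k)"
      proof (cases "k = m")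
        case True
        then show ?thesis using dR dH txp tyP by (simp add: c'_def R'_def H'_def)
      next
        case False
        then have "k < m" using \<open>k < Suc m\<close> by simp
        then show ?thesis using mc False by (simp add: c'_def R'_def H'_def)
      qed
    qed
    have new: "complex_of_real (c' m) * kron q (R' m) (H' m) i j
       = outer (pv q x y) i j" for i j
      unfolding outer_pv_kron kron_def R'_def H'_def c'_def fun_upd_same
      using txp tyP by (rule scal_cancel)
    have old: "(\<Sum>k<m. complex_of_real (c' k) * kron q (R' k) (H' k) i j) =
               (\<Sum>k<m. complex_of_real (c k) * kron q (R k) (H k) i j)" for i j
      by (rule sum.cong) (auto simp: c'_def R'_def H'_def)
    have "mat_eq (p*q) (\<lambda>i j. M i j + outer (pv q x y) i j)
       (\<lambda>i j. \<Sum>k<Suc m. complex_of_real (c' k) * kron q (R' k) (H' k) i j)"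
      using eq unfolding mat_eq_def sum.lessThan_Suc old new by simp
    then show ?thesis using P by blast
  qed
next
  case (pcEq M M')
  then show ?case by (auto simp: mat_eq_def)
qed

lemma kron_trace:
  assumes "q > 0"
  shows "(\<Sum>i<p*q. kron q R H i i) = mat_trace p R * mat_trace q H"
  using sum_divmod[OF assms, of "\<lambda>a b. R a a * H b b" p]
  by (simp add: kron_def mat_trace_def sum_product)

lemma pcone_sep:
  assumes "pcone p q \<rho>" "q > 0" "mat_trace (p*q) \<rho> = 1"
  shows "separable p q \<rho>"
proof -
  obtain m :: nat and c R H where mc: "\<forall>k<m. c k \<ge> 0 \<and> density_mat p (R k) \<and> density_mat q (H k)"
    and eq: "mat_eq (p*q) \<rho> (\<lambda>i j. \<Sum>k<m. complex_of_real (c k) * kron q (R k) (H k) i j)"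
    using pcone_repr[OF assms(1,2)] by blast
  have "1 = (\<Sum>i<p*q. \<rho> i i)" using assms(3) by (simp add: mat_trace_def)
  also have "\<dots> = (\<Sum>i<p*q. \<Sum>k<m. complex_of_real (c k) * kron q (R k) (H k) i i)"
    using eq by (simp add: mat_eq_def)
  also have "\<dots> = (\<Sum>k<m. complex_of_real (c k) * (\<Sum>i<p*q. kron q (R k) (H k) i i))"
    by (subst sum.swap) (simp add: sum_distrib_left)
  also have "\<dots> = (\<Sum>k<m. complex_of_real (c k))"
    using mc by (simp add: kron_trace[OF assms(2)] density_mat_def)
  finally have "(\<Sum>k<m. c k) = 1"
    by (metis of_real_eq_1_iff of_real_sum)
  then show ?thesis unfolding separable_def using mc eq by blast
qed




definition zeta :: "nat \<Rightarrow> complex" where "zeta N = cis (2 * pi / real N)"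

lemma zeta_pow: "zeta N ^ m = cis (real m * (2 * pi / real N))"
  unfolding zeta_def by (rule DeMoivre)

lemma zeta_N: "N > 0 \<Longrightarrow> zeta N ^ N = 1"
proof -
  assume "N > 0"
  then have "real N * (2 * pi / real N) = 2 * pi" by simp
  then show ?thesis unfolding zeta_pow by (simp only: cis_2pi)
qed

lemma norm_zeta_pow: "norm (zeta N ^ m) = 1"
  unfolding zeta_pow by (rule norm_cis)

lemma cnj_zeta_mult: "cnj (zeta N ^ m) * zeta N ^ m = 1"
  unfolding zeta_pow cis_cnj cis_mult by simp

lemma cis_ne_1:
  assumes "N > 0" "s < N" "s' < N" "s \<noteq> s'"
  shows "cis (2 * pi * (real s - real s') / real N) \<noteq> 1"
proof
  assume "cis (2 * pi * (real s - real s') / real N) = 1"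
  then have "cos (2 * pi * (real s - real s') / real N) = 1"
    by (metis Re_complex_of_real complex_Re_numeral cis.simps(1) one_complex.simps(1))
  then obtain n :: int where n: "2 * pi * (real s - real s') / real N = real_of_int n * 2 * pi"
    using cos_one_2pi_int by blast
  have "2 * pi * ((real s - real s') - real_of_int n * real N) = 0"
    using n assms(1) by (simp add: field_simps)
  then have "real s - real s' = real_of_int n * real N"
    by simp
  then have "real_of_int (int s - int s') = real_of_int (n * int N)" by simp
  then have "int s - int s' = n * int N" by (simp only: of_int_eq_iff)
  moreover have "\<bar>int s - int s'\<bar> < int N" using assms by auto
  moreover have "int s - int s' \<noteq> 0" using assms by auto
  ultimately have "\<bar>n\<bar> * int N < int N" "n \<noteq> 0"
    by (auto simp: abs_mult)
  then show False
    by (metis abs_ge_zero int_one_le_iff_zero_less mult_le_cancel_right1 not_less of_nat_less_0_iff zero_less_abs_iff)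
qed

lemma zeta_orth:
  assumes "N > 0" "s < N" "s' < N"
  shows "(\<Sum>j<N. zeta N ^ (j*s) * cnj (zeta N ^ (j*s'))) = (if s = s' then of_nat N else 0)"
proof -
  define z where "z = cis (2 * pi * (real s - real s') / real N)"
  have e: "zeta N ^ (j*s) * cnj (zeta N ^ (j*s')) = z ^ j" for j
  proof -
    have arg: "real (j*s) * (2 * pi / real N) + - (real (j*s') * (2 * pi / real N)) =
        real j * (2 * pi * (real s - real s') / real N)"
      by (simp add: algebra_simps diff_divide_distrib)
    have "zeta N ^ (j*s) * cnj (zeta N ^ (j*s')) = cis (real j * (2 * pi * (real s - real s') / real N))"
      by (simp only: zeta_pow cis_cnj cis_mult arg)
    then show ?thesis by (simp add: z_def DeMoivre)
  qed
  show ?thesis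
  proof (cases "s = s'")
    case True
    then have "z = 1" by (simp add: z_def)
    then show ?thesis using True unfolding e by simp
  next
    case False
    then have "z \<noteq> 1" using cis_ne_1[OF assms False] by (simp add: z_def)
    have "z ^ N = cis (real N * (2 * pi * (real s - real s') / real N))"
      by (simp add: z_def DeMoivre)
    also have "\<dots> = cis (2 * pi * (real_of_int (int s - int s')))"
      using assms(1) by simp
    also have "\<dots> = 1" by (rule cis_multiple_2pi) simp
    finally have "z ^ N = 1" .
    then show ?thesis using False \<open>z \<noteq> 1\<close> unfolding e sum_gp_strict by simp
  qed
qed




lemma parseval:
  assumes "N > 0"
  shows "(\<Sum>j<N. outer (\<lambda>k. \<Sum>s<N. zeta N ^ (j*s) * u s k) i i') =
         of_nat N * (\<Sum>s<N. outer (u s) i i')"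
proof -
  have "(\<Sum>j<N. outer (\<lambda>k. \<Sum>s<N. zeta N ^ (j*s) * u s k) i i') =
        (\<Sum>j<N. \<Sum>s<N. \<Sum>s'<N. (zeta N ^ (j*s) * cnj (zeta N ^ (j*s'))) * (u s i * cnj (u s' i')))"
  proof (rule sum.cong[OF refl])
    fix j
    have "outer (\<lambda>k. \<Sum>s<N. zeta N ^ (j*s) * u s k) i i' =
      (\<Sum>s<N. zeta N ^ (j*s) * u s i) * (\<Sum>s'<N. cnj (zeta N ^ (j*s')) * cnj (u s' i'))"
      unfolding outer_def by (simp only: cnj_sum complex_cnj_mult)
    also have "\<dots> = (\<Sum>s<N. \<Sum>s'<N. (zeta N ^ (j*s) * u s i) * (cnj (zeta N ^ (j*s')) * cnj (u s' i')))"
      by (rule sum_product)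
    also have "\<dots> = (\<Sum>s<N. \<Sum>s'<N. (zeta N ^ (j*s) * cnj (zeta N ^ (j*s'))) * (u s i * cnj (u s' i')))"
      by (simp only: mult_ac)
    finally show "outer (\<lambda>k. \<Sum>s<N. zeta N ^ (j*s) * u s k) i i' =
      (\<Sum>s<N. \<Sum>s'<N. (zeta N ^ (j*s) * cnj (zeta N ^ (j*s'))) * (u s i * cnj (u s' i')))" .
  qed
  also have "\<dots> = (\<Sum>s<N. \<Sum>s'<N. \<Sum>j<N. (zeta N ^ (j*s) * cnj (zeta N ^ (j*s'))) * (u s i * cnj (u s' i')))"
    by (subst sum.swap) (subst (2) sum.swap, rule refl)
  also have "\<dots> = (\<Sum>s<N. \<Sum>s'<N. (\<Sum>j<N. zeta N ^ (j*s) * cnj (zeta N ^ (j*s'))) * (u s i * cnj (u s' i')))"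
    by (simp only: sum_distrib_right)
  also have "\<dots> = (\<Sum>s<N. \<Sum>s'<N. (if s = s' then of_nat N else 0) * (u s i * cnj (u s' i')))"
    by (intro sum.cong refl) (simp only: zeta_orth[OF assms] lessThan_iff)
  also have "\<dots> = (\<Sum>s<N. of_nat N * (u s i * cnj (u s i')))"
  proof (intro sum.cong refl)
    fix s assume "s \<in> {..<N}"
    have "(\<Sum>s'<N. (if s = s' then of_nat N else 0) * (u s i * cnj (u s' i'))) =
          (\<Sum>s'<N. if s = s' then of_nat N * (u s i * cnj (u s' i')) else 0)"
      by (intro sum.cong refl) simp
    also have "\<dots> = of_nat N * (u s i * cnj (u s i'))"
      using \<open>s \<in> {..<N}\<close> by (simp add: sum.delta)
    finally show "(\<Sum>s'<N. (if s = s' then of_nat N else 0) * (u s i * cnj (u s' i'))) = of_nat N * (u s i * cnj (u s i'))" .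
  qed
  also have "\<dots> = of_nat N * (\<Sum>s<N. outer (u s) i i')"
    by (simp add: outer_def sum_distrib_left)
  finally show ?thesis .
qed




lemma exists_succ:
  assumes fin: "finite A" and sub: "A \<subseteq> {..<q}\<times>{..<q}"
    and cd: "\<forall>v<q. card {e\<in>A. fst e = v} = card {e\<in>A. snd e = v}"
  shows "\<exists>\<pi>. bij_betw \<pi> A A \<and> (\<forall>e\<in>A. fst (\<pi> e) = snd e)"
proof -
  have "\<forall>v\<in>{..<q}. \<exists>h. bij_betw h {e\<in>A. snd e = v} {e\<in>A. fst e = v}"
  proof
    fix v assume "v \<in> {..<q}"
    then have "card {e\<in>A. snd e = v} = card {e\<in>A. fst e = v}" using cd by simp
    then show "\<exists>h. bij_betw h {e\<in>A. snd e = v} {e\<in>A. fst e = v}"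
      using fin by (intro finite_same_card_bij) auto
  qed
  then obtain h where h: "\<forall>v\<in>{..<q}. bij_betw (h v) {e\<in>A. snd e = v} {e\<in>A. fst e = v}"
    by (rule bchoice[THEN exE]) blast
  define \<pi> where "\<pi> e = h (snd e) e" for e
  have maps: "\<pi> e \<in> A \<and> fst (\<pi> e) = snd e" if "e \<in> A" for e
  proof -
    have "snd e \<in> {..<q}" using that sub by auto
    then have b: "bij_betw (h (snd e)) {e'\<in>A. snd e' = snd e} {e'\<in>A. fst e' = snd e}" using h by blast
    have "e \<in> {e'\<in>A. snd e' = snd e}" using that by simp
    then have "h (snd e) e \<in> {e'\<in>A. fst e' = snd e}" using bij_betwE[OF b] by blast
    then show ?thesis by (simp add: \<pi>_def)
  qed
  have inj: "inj_on \<pi> A"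
  proof (rule inj_onI)
    fix e1 e2 assume e: "e1 \<in> A" "e2 \<in> A" "\<pi> e1 = \<pi> e2"
    then have v: "snd e1 = snd e2" using maps by metis
    have "snd e1 \<in> {..<q}" using e sub by auto
    then have b: "inj_on (h (snd e1)) {e'\<in>A. snd e' = snd e1}" using h bij_betw_imp_inj_on by blast
    show "e1 = e2"
      using inj_onD[OF b] e v by (simp add: \<pi>_def)
  qed
  have surj: "\<pi> ` A = A"
  proof
    show "\<pi> ` A \<subseteq> A" using maps by auto
  next
    show "A \<subseteq> \<pi> ` A"
    proof
      fix a assume a: "a \<in> A"
      then have "fst a \<in> {..<q}" using sub by auto
      then have b: "h (fst a) ` {e'\<in>A. snd e' = fst a} = {e'\<in>A. fst e' = fst a}"
        using h bij_betw_imp_surj_on by blast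
      have "a \<in> {e'\<in>A. fst e' = fst a}" using a by simp
      then obtain e where "e \<in> {e'\<in>A. snd e' = fst a}" "h (fst a) e = a"
        using b by (metis (no_types, lifting) imageE)
      then show "a \<in> \<pi> ` A" by (auto simp: \<pi>_def intro!: image_eqI[of _ _ e])
    qed
  qed
  show ?thesis using inj surj maps unfolding bij_betw_def by blast
qed

lemma funpow_permutes: "p permutes S \<Longrightarrow> (p ^^ n) permutes S"
proof (induction n)
  case 0
  show ?case using permutes_id[of S] by (simp add: id_def)
next
  case (Suc n)
  have a: "(p^^n) permutes S" using Suc by simp
  show ?case unfolding funpow.simps(2) by (rule permutes_compose[OF a Suc.prems])
qed

lemma sum_shift_cyc:
  fixes F :: "nat \<Rightarrow> 'a::ab_group_add"
  assumes "F N = F 0"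
  shows "(\<Sum>s<N. F (Suc s)) = (\<Sum>s<N. F s)"
proof -
  have "F 0 + (\<Sum>s<N. F (Suc s)) = (\<Sum>s<Suc N. F s)" by (simp only: sum.lessThan_Suc_shift)
  also have "\<dots> = (\<Sum>s<N. F s) + F N" by (simp only: sum.lessThan_Suc)
  finally show ?thesis using assms by (simp add: add.commute)
qed




definition dl :: "nat \<Rightarrow> nat \<Rightarrow> complex" where "dl a k = (if k = a then 1 else 0)"
definition wa :: "nat \<Rightarrow> nat \<times> nat \<Rightarrow> nat \<Rightarrow> complex" where
  "wa q e = (\<lambda>k. dl (fst e) k - dl (q + snd e) k)"
definition avec :: "nat \<Rightarrow> nat \<Rightarrow> nat \<Rightarrow> complex" where
  "avec N j a = (if a = 0 then 1 else if a = 1 then - cnj (zeta N ^ j) else 0)"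

lemma cross_pcone:
  assumes q: "q > 0" and fin: "finite A" and sub: "A \<subseteq> {..<q}\<times>{..<q}"
    and cd: "\<forall>v<q. card {e\<in>A. fst e = v} = card {e\<in>A. snd e = v}"
  shows "pcone 2 q (\<lambda>i j. \<Sum>e\<in>A. outer (wa q e) i j)"
proof -
  obtain \<pi> where bij: "bij_betw \<pi> A A" and succ: "\<forall>e\<in>A. fst (\<pi> e) = snd e"
    using exists_succ[OF fin sub cd] by blast
  define \<pi>' where "\<pi>' e = (if e \<in> A then \<pi> e else e)" for e
  have bij': "bij_betw \<pi>' A A"
    using bij_betw_cong[of A \<pi>' \<pi> A] bij by (simp add: \<pi>'_def)
  have perm: "\<pi>' permutes A" by (rule bij_imp_permutes[OF bij']) (simp add: \<pi>'_def)
  then have "permutation \<pi>'" using fin permutation_permutes by blast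
  then obtain N where N: "(\<pi>' ^^ N) = id" "N > 0" by (rule permutation_is_nilpotent)
  define P where "P e s = (\<pi>' ^^ s) e" for e s
  have bijs: "bij_betw (\<pi>' ^^ s) A A" for s
    by (rule permutes_imp_bij[OF funpow_permutes[OF perm]])
  have PA: "P e s \<in> A" if "e \<in> A" for e s
    using bij_betwE[OF bijs] that by (simp add: P_def)
  have PSuc: "fst (P e (Suc s)) = snd (P e s)" if "e \<in> A" for e s
  proof -
    have "P e (Suc s) = \<pi>' (P e s)" by (simp add: P_def)
    also have "\<dots> = \<pi> (P e s)" using PA[OF that] by (simp add: \<pi>'_def)
    finally show ?thesis using succ PA[OF that] by simp
  qed
  have PN: "P e N = e" for e using N(1) by (simp add: P_def)
  have P0: "P e 0 = e" for e by (simp add: P_def)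
  have Pq: "fst (P e s) < q \<and> snd (P e s) < q" if "e \<in> A" for e s
    using PA[OF that, of s] sub by (cases "P e s") auto
  define g where "g e j = (\<lambda>k. \<Sum>s<N. zeta N ^ (j*s) * wa q (P e s) k)" for e j
  define fv where "fv e j = (\<lambda>b. \<Sum>s<N. zeta N ^ (j*s) * dl (fst (P e s)) b)" for e j
  have prod: "g e j = pv q (avec N j) (fv e j)" if e: "e \<in> A" for e j
  proof
    fix k
    consider (a) "k < q" | (b) "q \<le> k" "k < 2*q" | (c) "2*q \<le> k" by linarith
    then show "g e j k = pv q (avec N j) (fv e j) k"
    proof cases
      case a
      then have dm: "k div q = 0" "k mod q = k" by simp_all
      have "wa q (P e s) k = dl (fst (P e s)) k" for s
        using a by (simp add: wa_def dl_def)
      then show ?thesis by (simp add: g_def fv_def pv_def dm avec_def)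
    next
      case b
      then obtain \<beta> where kb: "k = q + \<beta>" "\<beta> < q" by (metis add_less_cancel_left le_Suc_ex mult_2)
      have dm: "k div q = 1" "k mod q = \<beta>" using kb q by simp_all
      have w: "wa q (P e s) k = - dl (fst (P e (Suc s))) \<beta>" for s
        using Pq[OF e, of s] PSuc[OF e, of s] kb by (auto simp: wa_def dl_def)
      define F where "F s = zeta N ^ (j*s) * dl (fst (P e s)) \<beta>" for s
      have FN: "F N = F 0"
      proof -
        have "zeta N ^ (j*N) = 1" using zeta_N[OF N(2)] by (simp add: power_mult mult.commute[of j N])
        then show ?thesis by (simp add: F_def PN P0)
      qed
      have FS: "F (Suc s) = zeta N ^ j * (zeta N ^ (j*s) * dl (fst (P e (Suc s))) \<beta>)" for s
        by (simp add: F_def power_add mult_Suc_right mult_ac)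
      have "pv q (avec N j) (fv e j) k = - cnj (zeta N ^ j) * (\<Sum>s<N. F s)"
        by (simp add: pv_def dm avec_def fv_def F_def)
      also have "\<dots> = - cnj (zeta N ^ j) * (\<Sum>s<N. F (Suc s))"
        by (simp only: sum_shift_cyc[OF FN])
      also have "\<dots> = - (\<Sum>s<N. (cnj (zeta N ^ j) * zeta N ^ j) * (zeta N ^ (j*s) * dl (fst (P e (Suc s))) \<beta>))"
        by (simp only: FS sum_distrib_left mult.assoc mult_minus_left sum_negf)
      also have "\<dots> = - (\<Sum>s<N. zeta N ^ (j*s) * dl (fst (P e (Suc s))) \<beta>)"
        by (simp only: cnj_zeta_mult mult_1_left)
      also have "\<dots> = g e j k"
        by (simp add: g_def w sum_negf)
      finally show ?thesis by simp
    next
      case c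
      have "2 \<le> k div q"
        using div_le_mono[OF c, of q] q by simp
      then have av: "avec N j (k div q) = 0" by (simp add: avec_def)
      have "wa q (P e s) k = 0" for s
        using Pq[OF e, of s] c by (auto simp: wa_def dl_def)
      then show ?thesis by (simp add: g_def pv_def av)
    qed
  qed
  have pars: "(\<Sum>j<N. outer (g e j) i i') = of_nat N * (\<Sum>s<N. outer (wa q (P e s)) i i')" for e i i'
    unfolding g_def by (rule parseval[OF N(2)])
  have rot: "(\<Sum>e\<in>A. \<Sum>s<N. outer (wa q (P e s)) i i') = of_nat N * (\<Sum>e\<in>A. outer (wa q e) i i')" for i i'
  proof -
    have "(\<Sum>e\<in>A. \<Sum>s<N. outer (wa q (P e s)) i i') = (\<Sum>s<N. \<Sum>e\<in>A. outer (wa q ((\<pi>'^^s) e)) i i')"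
      unfolding P_def by (rule sum.swap)
    also have "\<dots> = (\<Sum>s<N. \<Sum>e\<in>A. outer (wa q e) i i')"
      by (rule sum.cong[OF refl], rule sum.reindex_bij_betw[OF bijs])
    also have "\<dots> = of_nat N * (\<Sum>e\<in>A. outer (wa q e) i i')" by simp
    finally show ?thesis .
  qed
  have key: "(\<Sum>e\<in>A. outer (wa q e) i i') = complex_of_real (1 / (real N)^2) *
      (\<Sum>e\<in>A. \<Sum>j<N. outer (pv q (avec N j) (fv e j)) i i')" for i i'
  proof -
    have "(\<Sum>e\<in>A. \<Sum>j<N. outer (pv q (avec N j) (fv e j)) i i') = (\<Sum>e\<in>A. \<Sum>j<N. outer (g e j) i i')"
      using prod by (intro sum.cong refl) simp
    also have "\<dots> = (\<Sum>e\<in>A. of_nat N * (\<Sum>s<N. outer (wa q (P e s)) i i'))" by (simp only: pars)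
    also have "\<dots> = of_nat N * (of_nat N * (\<Sum>e\<in>A. outer (wa q e) i i'))"
      by (simp only: sum_distrib_left[symmetric] rot)
    finally have h: "(\<Sum>e\<in>A. \<Sum>j<N. outer (pv q (avec N j) (fv e j)) i i') =
       of_nat N * (of_nat N * (\<Sum>e\<in>A. outer (wa q e) i i'))" .
    have nz: "(of_nat N :: complex) \<noteq> 0" using N(2) by simp
    show ?thesis unfolding h using nz by (simp add: field_simps power2_eq_square)
  qed
  have "pcone 2 q (\<lambda>i i'. \<Sum>e\<in>A. \<Sum>j<N. outer (pv q (avec N j) (fv e j)) i i')"
    by (intro pcone_sum fin finite_lessThan pcone_gen)
  then have "pcone 2 q (\<lambda>i i'. complex_of_real (1 / (real N)^2) * (\<Sum>e\<in>A. \<Sum>j<N. outer (pv q (avec N j) (fv e j)) i i'))"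
    by (rule pcone_scale) simp
  then show ?thesis unfolding key .
qed




definition elap :: "nat set \<Rightarrow> cmat" where
  "elap e = (\<lambda>i j. if i = j then (if i \<in> e then 1 else 0) else if {i, j} = e then -1 else 0)"

definition Xq :: "nat \<Rightarrow> nat set set" where
  "Xq q = {{b, q + b'} | b b'. b < q \<and> b' < q}"

definition Bm :: "nat \<Rightarrow> nat set set \<Rightarrow> nat \<times> nat \<Rightarrow> nat" where
  "Bm q E = restrict (\<lambda>(b, b'). if {b, q + b'} \<in> E then 1 else 0) ({..<q}\<times>{..<q})"

lemma finite_all_edges: "finite (all_edges n)"
proof -
  have "all_edges n \<subseteq> Pow {..<n}" unfolding all_edges_def by auto
  then show ?thesis by (rule finite_subset) simp
qed

lemma lap_sum:
  assumes "finite E"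
  shows "laplacian E i j = (\<Sum>e\<in>E. elap e i j)"
proof (cases "i = j")
  case True
  have "(\<Sum>e\<in>E. elap e i j) = (\<Sum>e\<in>E. of_bool (i \<in> e))"
    using True by (intro sum.cong refl) (simp add: elap_def)
  also have "\<dots> = of_nat (card (E \<inter> {e. i \<in> e}))" using assms by simp
  also have "E \<inter> {e. i \<in> e} = {e \<in> E. i \<in> e}" by auto
  finally show ?thesis using True by (simp add: laplacian_def degree_def)
next
  case False
  have "(\<Sum>e\<in>E. elap e i j) = (\<Sum>e\<in>E. if e = {i, j} then -1 else 0)"
    using False by (intro sum.cong refl) (auto simp: elap_def)
  also have "\<dots> = (if {i, j} \<in> E then -1 else 0)"
    using assms by (simp add: sum.delta')
  finally show ?thesis using False by (simp add: laplacian_def)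
qed

lemma elap_outer:
  assumes "u \<noteq> v"
  shows "elap {u, v} = outer (\<lambda>k. dl u k - dl v k)"
proof (intro ext)
  fix i j
  show "elap {u, v} i j = outer (\<lambda>k. dl u k - dl v k) i j"
    using assms by (auto simp: elap_def outer_def dl_def doubleton_eq_iff)
qed

lemma dl_divmod:
  assumes "b < q"
  shows "dl (a*q+b) k = dl a (k div q) * dl b (k mod q)"
proof (cases "k = a*q+b")
  case True
  then show ?thesis using assms by (simp add: dl_def)
next
  case False
  have "\<not> (k div q = a \<and> k mod q = b)"
  proof
    assume "k div q = a \<and> k mod q = b"
    then have "k = a*q+b" by (metis div_mult_mod_eq)
    then show False using False by simp
  qed
  then show ?thesis using False by (auto simp: dl_def)
qed

lemma vec_pv:
  assumes "b < q" "b' < q"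
  shows "(\<lambda>k. dl (a*q+b) k - dl (a*q+b') k) = pv q (dl a) (\<lambda>k. dl b k - dl b' k)"
proof
  fix k
  show "dl (a*q+b) k - dl (a*q+b') k = pv q (dl a) (\<lambda>k. dl b k - dl b' k) k"
    unfolding dl_divmod[OF assms(1)] dl_divmod[OF assms(2)] pv_def by (simp add: algebra_simps)
qed

lemma within_pcone:
  assumes q: "q > 0" and e: "e \<in> all_edges (2*q)" and nx: "e \<notin> Xq q"
  shows "pcone 2 q (elap e)"
proof -
  obtain u v where uv: "e = {u, v}" "u < 2*q" "v < 2*q" "u \<noteq> v"
    using e unfolding all_edges_def by blast
  have gen: "pcone 2 q (elap {a*q+b, a*q+b'})" if "b < q" "b' < q" "b \<noteq> b'" for a b b'
  proof -
    have "a*q+b \<noteq> a*q+b'" using that by simp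
    then have "elap {a*q+b, a*q+b'} = outer (pv q (dl a) (\<lambda>k. dl b k - dl b' k))"
      by (simp add: elap_outer vec_pv[OF that(1,2)])
    then show ?thesis by (simp add: pcone_gen)
  qed
  consider (a) "u < q" "v < q" | (b) "q \<le> u" "q \<le> v" | (c) "u < q" "q \<le> v" | (d) "v < q" "q \<le> u"
    by linarith
  then show ?thesis
  proof cases
    case a
    then show ?thesis using gen[of u v 0] uv by simp
  next
    case b
    then have "u - q < q" "v - q < q" "u - q \<noteq> v - q" using uv by auto
    moreover have "1*q + (u-q) = u" "1*q + (v-q) = v" using b by auto
    ultimately show ?thesis using gen[of "u-q" "v-q" 1] uv by simp
  next
    case c
    then have "e = {u, q + (v - q)}" "v - q < q" using uv by auto
    then have "e \<in> Xq q" using c unfolding Xq_def by blast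
    then show ?thesis using nx by simp
  next
    case d
    then have "e = {v, q + (u - q)}" "u - q < q" using uv by auto
    then have "e \<in> Xq q" using d unfolding Xq_def by blast
    then show ?thesis using nx by simp
  qed
qed




definition Aset :: "nat \<Rightarrow> nat set set \<Rightarrow> (nat \<times> nat) set" where
  "Aset q E = {a \<in> {..<q}\<times>{..<q}. {fst a, q + snd a} \<in> E}"

lemma cross_sum:
  shows "(\<Sum>e\<in>E \<inter> Xq q. elap e i j) = (\<Sum>a\<in>Aset q E. outer (wa q a) i j)"
proof -
  let ?f = "\<lambda>a. {fst a, q + snd a}"
  have img: "E \<inter> Xq q = ?f ` Aset q E"
  proof
    show "E \<inter> Xq q \<subseteq> ?f ` Aset q E"
    proof
      fix e assume "e \<in> E \<inter> Xq q"
      then obtain b b' where bb: "e = {b, q+b'}" "b<q" "b'<q" "e\<in>E" unfolding Xq_def by blast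
      then have "(b, b') \<in> Aset q E" unfolding Aset_def by simp
      then show "e \<in> ?f ` Aset q E" using bb(1) by (intro image_eqI[of _ _ "(b,b')"]) simp_all
    qed
  next
    show "?f ` Aset q E \<subseteq> E \<inter> Xq q"
    proof
      fix x assume "x \<in> ?f ` Aset q E"
      then obtain a where a: "a \<in> Aset q E" "x = ?f a" by blast
      then have "fst a < q" "snd a < q" "x \<in> E" unfolding Aset_def by auto
      moreover have "x \<in> Xq q" unfolding Xq_def using a(2) \<open>fst a < q\<close> \<open>snd a < q\<close> by blast
      ultimately show "x \<in> E \<inter> Xq q" by simp
    qed
  qed
  have inj: "inj_on ?f (Aset q E)"
  proof (rule inj_onI)
    fix a b assume ab: "a \<in> Aset q E" "b \<in> Aset q E" "?f a = ?f b"
    then have lt: "fst a < q" "fst b < q" unfolding Aset_def by auto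
    from ab(3) have "(fst a = fst b \<and> q + snd a = q + snd b) \<or> (fst a = q + snd b \<and> q + snd a = fst b)"
      by (simp only: doubleton_eq_iff)
    then have "fst a = fst b \<and> snd a = snd b" using lt by auto
    then show "a = b" by (simp add: prod_eq_iff)
  qed
  have "(\<Sum>e\<in>E \<inter> Xq q. elap e i j) = (\<Sum>a\<in>Aset q E. elap (?f a) i j)"
    unfolding img by (rule sum.reindex[OF inj, unfolded comp_def])
  also have "\<dots> = (\<Sum>a\<in>Aset q E. outer (wa q a) i j)"
  proof (rule sum.cong[OF refl])
    fix a assume "a \<in> Aset q E"
    then have "fst a \<noteq> q + snd a" unfolding Aset_def by auto
    then have "elap (?f a) = outer (\<lambda>k. dl (fst a) k - dl (q + snd a) k)" by (rule elap_outer)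
    then show "elap (?f a) i j = outer (wa q a) i j"
      by (simp only: wa_def)
  qed
  finally show ?thesis .
qed

lemma card_cond:
  assumes lss: "line_sum_symmetric q (Bm q E)"
  shows "\<forall>v<q. card {e\<in>Aset q E. fst e = v} = card {e\<in>Aset q E. snd e = v}"
proof (intro allI impI)
  fix v assume v: "v < q"
  have r: "(\<Sum>j<q. Bm q E (v, j)) = card ({..<q} \<inter> {j. {v, q + j} \<in> E})"
  proof -
    have "(\<Sum>j<q. Bm q E (v, j)) = (\<Sum>j<q. of_bool ({v, q + j} \<in> E))"
      using v by (intro sum.cong refl) (simp add: Bm_def)
    then show ?thesis by simp
  qed
  have c: "(\<Sum>j<q. Bm q E (j, v)) = card ({..<q} \<inter> {j. {j, q + v} \<in> E})"
  proof -
    have "(\<Sum>j<q. Bm q E (j, v)) = (\<Sum>j<q. of_bool ({j, q + v} \<in> E))"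
      using v by (intro sum.cong refl) (simp add: Bm_def)
    then show ?thesis by simp
  qed
  have r2: "{e\<in>Aset q E. fst e = v} = (\<lambda>j. (v, j)) ` ({..<q} \<inter> {j. {v, q + j} \<in> E})"
    using v unfolding Aset_def by auto
  have c2: "{e\<in>Aset q E. snd e = v} = (\<lambda>j. (j, v)) ` ({..<q} \<inter> {j. {j, q + v} \<in> E})"
    using v unfolding Aset_def by auto
  have "card {e\<in>Aset q E. fst e = v} = (\<Sum>j<q. Bm q E (v, j))"
    unfolding r2 r by (rule card_image) (simp add: inj_on_def)
  also have "\<dots> = (\<Sum>j<q. Bm q E (j, v))"
    using lss v unfolding line_sum_symmetric_def by blast
  also have "\<dots> = card {e\<in>Aset q E. snd e = v}"
    unfolding c2 c by (rule card_image[symmetric]) (simp add: inj_on_def)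
  finally show "card {e\<in>Aset q E. fst e = v} = card {e\<in>Aset q E. snd e = v}" .
qed

lemma lap_trace:
  assumes "E \<subseteq> all_edges n" "E \<noteq> {}"
  shows "mat_trace n (laplacian E) = of_nat (\<Sum>i<n. degree E i)" and "(\<Sum>i<n. degree E i) > 0"
proof -
  show "mat_trace n (laplacian E) = of_nat (\<Sum>i<n. degree E i)"
    by (simp add: mat_trace_def laplacian_def)
  obtain e where e: "e \<in> E" using assms(2) by blast
  then obtain u v where uv: "e = {u, v}" "u < n" using assms(1) unfolding all_edges_def by blast
  have fin: "finite E" using finite_subset[OF assms(1) finite_all_edges] .
  have "e \<in> {e \<in> E. u \<in> e}" using e uv by simp
  then have "degree E u > 0" unfolding degree_def using fin
    by (metis (no_types, lifting) card_gt_0_iff empty_iff finite_subset mem_Collect_eq subsetI)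
  then show "(\<Sum>i<n. degree E i) > 0"
    using uv(2) by (intro sum_pos2[of _ u]) auto
qed

lemma suff:
  assumes q: "q > 0" and sub: "E \<subseteq> all_edges (2*q)" and ne: "E \<noteq> {}"
    and lss: "line_sum_symmetric q (Bm q E)"
  shows "separable 2 q (norm_laplacian (2*q) E)"
proof -
  have fin: "finite E" using finite_subset[OF sub finite_all_edges] .
  have Asub: "Aset q E \<subseteq> {..<q}\<times>{..<q}" unfolding Aset_def by auto
  have finA: "finite (Aset q E)" using finite_subset[OF Asub] by simp
  have pint: "pcone 2 q (\<lambda>i j. \<Sum>e\<in>E \<inter> Xq q. elap e i j)"
    unfolding cross_sum by (rule cross_pcone[OF q finA Asub card_cond[OF lss]])
  have pdiff: "pcone 2 q (\<lambda>i j. \<Sum>e\<in>E - Xq q. elap e i j)"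
  proof (rule pcone_sum)
    show "finite (E - Xq q)" using fin by simp
  next
    fix e assume "e \<in> E - Xq q"
    then show "pcone 2 q (elap e)" using within_pcone[OF q] sub by blast
  qed
  have L: "laplacian E = (\<lambda>i j. (\<Sum>e\<in>E \<inter> Xq q. elap e i j) + (\<Sum>e\<in>E - Xq q. elap e i j))"
  proof (intro ext)
    fix i j
    show "laplacian E i j = (\<Sum>e\<in>E \<inter> Xq q. elap e i j) + (\<Sum>e\<in>E - Xq q. elap e i j)"
      using lap_sum[OF fin, of i j] sum.Int_Diff[OF fin, of "\<lambda>e. elap e i j" "Xq q"] by simp
  qed
  have pL: "pcone 2 q (laplacian E)"
    unfolding L by (rule pcone_add[OF pdiff pint])
  define T where "T = (\<Sum>i<2*q. degree E i)"
  have tr: "mat_trace (2*q) (laplacian E) = of_nat T" and Tpos: "T > 0"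
    using lap_trace[OF sub ne] by (simp_all add: T_def)
  have rho: "norm_laplacian (2*q) E = (\<lambda>i j. complex_of_real (1 / real T) * laplacian E i j)"
    unfolding norm_laplacian_def tr by (simp add: divide_inverse mult.commute)
  have prho: "pcone 2 q (norm_laplacian (2*q) E)"
    unfolding rho by (rule pcone_scale[OF pL]) simp
  have "mat_trace (2*q) (norm_laplacian (2*q) E) = mat_trace (2*q) (laplacian E) / mat_trace (2*q) (laplacian E)"
    by (simp only: norm_laplacian_def mat_trace_def sum_divide_distrib)
  also have "\<dots> = 1" using tr Tpos by simp
  finally show ?thesis using pcone_sep[OF prho q] by simp
qed




lemma sum_2q:
  fixes f :: "nat \<Rightarrow> 'a::comm_monoid_add"
  assumes q: "q > 0"
  shows "(\<Sum>j<2*q. f j) = (\<Sum>j<q. f j) + (\<Sum>j<q. f (q + j))"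
proof -
  have "(\<Sum>j<2*q. f j) = (\<Sum>j<2*q. (\<lambda>a b. f (a*q+b)) (j div q) (j mod q))"
    by simp
  also have "\<dots> = (\<Sum>a<2. \<Sum>b<q. f (a*q+b))" by (rule sum_divmod[OF q])
  also have "\<dots> = (\<Sum>j<q. f j) + (\<Sum>j<q. f (q + j))"
    by (simp add: numeral_2_eq_2)
  finally show ?thesis .
qed

lemma kron_rowsum:
  assumes q: "q > 0"
  shows "(\<Sum>j<p*q. kron q R H i j) = (\<Sum>a<p. R (i div q) a) * (\<Sum>b<q. H (i mod q) b)"
proof -
  have "(\<Sum>j<p*q. kron q R H i j) = (\<Sum>j<p*q. (\<lambda>a b. R (i div q) a * H (i mod q) b) (j div q) (j mod q))"
    by (simp add: kron_def)
  also have "\<dots> = (\<Sum>a<p. \<Sum>b<q. R (i div q) a * H (i mod q) b)" by (rule sum_divmod[OF q])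
  also have "\<dots> = (\<Sum>a<p. R (i div q) a) * (\<Sum>b<q. H (i mod q) b)"
    by (simp add: sum_product)
  finally show ?thesis .
qed

lemma kron_totsum:
  assumes q: "q > 0"
  shows "(\<Sum>i<p*q. \<Sum>j<p*q. kron q R H i j) = (\<Sum>a<p. \<Sum>a'<p. R a a') * (\<Sum>b<q. \<Sum>b'<q. H b b')"
proof -
  have "(\<Sum>i<p*q. \<Sum>j<p*q. kron q R H i j) =
        (\<Sum>i<p*q. (\<lambda>a b. (\<Sum>a'<p. R a a') * (\<Sum>b'<q. H b b')) (i div q) (i mod q))"
    by (simp add: kron_rowsum[OF q])
  also have "\<dots> = (\<Sum>a<p. \<Sum>b<q. (\<Sum>a'<p. R a a') * (\<Sum>b'<q. H b b'))" by (rule sum_divmod[OF q])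
  also have "\<dots> = (\<Sum>a<p. \<Sum>a'<p. R a a') * (\<Sum>b<q. \<Sum>b'<q. H b b')"
    by (simp add: sum_product)
  finally show ?thesis .
qed

lemma herm_colsum:
  assumes "hermitian_mat d X" "j < d"
  shows "(\<Sum>i<d. X i j) = cnj (\<Sum>i<d. X j i)"
proof -
  have "(\<Sum>i<d. X i j) = (\<Sum>i<d. cnj (X j i))"
  proof (rule sum.cong[OF refl])
    fix i assume "i \<in> {..<d}"
    then show "X i j = cnj (X j i)" using assms unfolding hermitian_mat_def by blast
  qed
  then show ?thesis by (simp only: cnj_sum)
qed

lemma psd_tot_real:
  assumes h: "hermitian_mat d X" and p: "psd_mat d X"
  shows "\<exists>r\<ge>0. (\<Sum>i<d. \<Sum>j<d. X i j) = complex_of_real r"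
proof -
  let ?s = "\<Sum>i<d. \<Sum>j<d. X i j"
  have re: "0 \<le> Re ?s"
    using p unfolding psd_mat_def by (drule_tac x="\<lambda>_. 1" in spec) simp
  have "cnj ?s = (\<Sum>i<d. \<Sum>j<d. cnj (X i j))" by (simp only: cnj_sum)
  also have "\<dots> = (\<Sum>j<d. \<Sum>i<d. cnj (X i j))" by (rule sum.swap)
  also have "\<dots> = (\<Sum>j<d. \<Sum>i<d. X j i)"
  proof (intro sum.cong refl)
    fix j i assume "j \<in> {..<d}" "i \<in> {..<d}"
    then have "X i j = cnj (X j i)" using h unfolding hermitian_mat_def by blast
    then show "cnj (X i j) = X j i" by simp
  qed
  finally have "cnj ?s = ?s" .
  then have "Im ?s = 0" by (metis Reals_cnj_iff complex_is_Real_iff)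
  then have "?s = complex_of_real (Re ?s)" by (simp add: complex_eq_iff)
  then show ?thesis using re by blast
qed

lemma cnj_mult_self: "cnj z * z = complex_of_real ((cmod z)^2)"
  using complex_norm_square[of z] by (simp add: mult.commute)

lemma psd_kernel:
  assumes h: "hermitian_mat d X" and p: "psd_mat d X"
    and z: "(\<Sum>i<d. \<Sum>j<d. X i j) = 0"
  shows "\<forall>i<d. (\<Sum>j<d. X i j) = 0"
proof -
  define w where "w i = (\<Sum>j<d. X i j)" for i
  define S where "S = (\<Sum>i<d. (cmod (w i))^2)"
  define Q where "Q v = (\<Sum>i<d. \<Sum>j<d. cnj (v i) * X i j * v j)" for v
  define a where "a = Re (Q w)"
  have Qp: "\<forall>v. 0 \<le> Re (Q v)" using p unfolding Q_def psd_mat_def .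
  have a0: "a \<ge> 0" using Qp unfolding a_def by (rule spec)
  have S0: "S \<ge> 0" unfolding S_def by (auto intro: sum_nonneg)
  have c1: "(\<Sum>i<d. \<Sum>j<d. cnj (w i) * X i j) = complex_of_real S"
  proof -
    have "(\<Sum>i<d. \<Sum>j<d. cnj (w i) * X i j) = (\<Sum>i<d. cnj (w i) * w i)"
      by (simp add: w_def sum_distrib_left)
    also have "\<dots> = complex_of_real S"
      unfolding S_def of_real_sum by (rule sum.cong[OF refl]) (rule cnj_mult_self)
    finally show ?thesis .
  qed
  have c2: "(\<Sum>i<d. \<Sum>j<d. X i j * w j) = complex_of_real S"
  proof -
    have "(\<Sum>i<d. \<Sum>j<d. X i j * w j) = (\<Sum>j<d. \<Sum>i<d. X i j * w j)" by (rule sum.swap)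
    also have "\<dots> = (\<Sum>j<d. (\<Sum>i<d. X i j) * w j)" by (simp add: sum_distrib_right)
    also have "\<dots> = (\<Sum>j<d. cnj (w j) * w j)"
    proof (rule sum.cong[OF refl])
      fix j assume "j \<in> {..<d}"
      then have "(\<Sum>i<d. X i j) = cnj (w j)" unfolding w_def using herm_colsum[OF h] by simp
      then show "(\<Sum>i<d. X i j) * w j = cnj (w j) * w j" by simp
    qed
    also have "\<dots> = complex_of_real S"
      unfolding S_def of_real_sum by (rule sum.cong[OF refl]) (rule cnj_mult_self)
    finally show ?thesis .
  qed
  have expand: "Q (\<lambda>k. 1 - complex_of_real t * w k) =
     - complex_of_real t * complex_of_real S - complex_of_real t * complex_of_real S
     + complex_of_real t * complex_of_real t * Q w" for t
  proof -
    let ?c = "complex_of_real t"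
    have trm: "cnj (1 - ?c * w i) * X i j * (1 - ?c * w j) =
       X i j - ?c * (cnj (w i) * X i j) - ?c * (X i j * w j) + ?c * ?c * (cnj (w i) * X i j * w j)" for i j
      by (simp add: algebra_simps)
    have "Q (\<lambda>k. 1 - ?c * w k) = (\<Sum>i<d. \<Sum>j<d. X i j) - ?c * (\<Sum>i<d. \<Sum>j<d. cnj (w i) * X i j)
       - ?c * (\<Sum>i<d. \<Sum>j<d. X i j * w j) + ?c * ?c * Q w"
      unfolding Q_def trm by (simp add: sum.distrib sum_subtractf sum_distrib_left)
    then show ?thesis unfolding z c1 c2 by simp
  qed
  have "S = 0"
  proof (rule ccontr)
    assume "S \<noteq> 0"
    then have Sp: "S > 0" using S0 by simp
    define t where "t = S / (a + 1)"
    have tp: "t > 0" using Sp a0 unfolding t_def by simp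
    have "0 \<le> Re (Q (\<lambda>k. 1 - complex_of_real t * w k))"
      using Qp by (rule spec)
    also have "Re (Q (\<lambda>k. 1 - complex_of_real t * w k)) = - 2 * t * S + t * t * a"
      unfolding expand a_def by simp
    finally have i1: "0 \<le> - 2 * t * S + t * t * a" .
    have "t * a < S"
    proof -
      have "t * a = S * (a / (a + 1))" unfolding t_def by simp
      also have "\<dots> < S * 1" using Sp a0 by (intro mult_strict_left_mono) simp_all
      finally show ?thesis by simp
    qed
    then have "t * (t * a) < t * S" using tp by simp
    then show False using i1 tp Sp by (simp add: algebra_simps)
  qed
  then have "\<forall>i\<in>{..<d}. (cmod (w i))^2 = 0"
    unfolding S_def by (subst (asm) sum_nonneg_eq_0_iff) auto
  then show ?thesis unfolding w_def by simp
qed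




lemma sum_dl: "u < n \<Longrightarrow> (\<Sum>j<n. dl u j) = 1"
  unfolding dl_def by (simp add: sum.delta')

lemma lap_rowsum:
  assumes sub: "E \<subseteq> all_edges n"
  shows "(\<Sum>j<n. laplacian E i j) = 0"
proof -
  have fin: "finite E" using finite_subset[OF sub finite_all_edges] .
  have "(\<Sum>j<n. laplacian E i j) = (\<Sum>j<n. \<Sum>e\<in>E. elap e i j)"
    by (simp add: lap_sum[OF fin])
  also have "\<dots> = (\<Sum>e\<in>E. \<Sum>j<n. elap e i j)" by (rule sum.swap)
  also have "\<dots> = 0"
  proof (rule sum.neutral, rule ballI)
    fix e assume "e \<in> E"
    then obtain u v where uv: "e = {u, v}" "u < n" "v < n" "u \<noteq> v"
      using sub unfolding all_edges_def by blast
    have "(\<Sum>j<n. elap e i j) = (\<Sum>j<n. (dl u i - dl v i) * cnj (dl u j - dl v j))"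
      unfolding uv(1) elap_outer[OF uv(4)] outer_def by simp
    also have "\<dots> = (dl u i - dl v i) * cnj (\<Sum>j<n. dl u j - dl v j)"
      by (simp add: sum_distrib_left cnj_sum)
    also have "(\<Sum>j<n. dl u j - dl v j) = 0"
      using uv by (simp add: sum_subtractf sum_dl)
    finally show "(\<Sum>j<n. elap e i j) = 0" by simp
  qed
  finally show ?thesis .
qed

lemma nec:
  assumes q: "q > 0" and sub: "E \<subseteq> all_edges (2*q)" and ne: "E \<noteq> {}"
    and sep: "separable 2 q (norm_laplacian (2*q) E)"
  shows "line_sum_symmetric q (Bm q E)"
proof -
  define \<rho> where "\<rho> = norm_laplacian (2*q) E"
  obtain m :: nat and c R H where mc: "\<forall>k<m. c k \<ge> 0 \<and> density_mat 2 (R k) \<and> density_mat q (H k)"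
    and eq: "mat_eq (2*q) \<rho> (\<lambda>i j. \<Sum>k<m. complex_of_real (c k) * kron q (R k) (H k) i j)"
    using sep unfolding separable_def \<rho>_def by blast
  define T where "T = (\<Sum>i<2*q. degree E i)"
  have tr: "mat_trace (2*q) (laplacian E) = of_nat T" and Tpos: "T > 0"
    using lap_trace[OF sub ne] by (simp_all add: T_def)
  have rho: "\<rho> i j = laplacian E i j / of_nat T" for i j
    unfolding \<rho>_def norm_laplacian_def tr ..
  have rowsum: "(\<Sum>j<2*q. \<rho> i j) = 0" for i
    unfolding rho by (simp add: sum_divide_distrib[symmetric] lap_rowsum[OF sub])
  define sR where "sR k = (\<Sum>a<2. \<Sum>a'<2. R k a a')" for k
  define sH where "sH k = (\<Sum>b<q. \<Sum>b'<q. H k b b')" for k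
  have tot: "(\<Sum>k<m. complex_of_real (c k) * (sR k * sH k)) = 0"
  proof -
    have "(\<Sum>k<m. complex_of_real (c k) * (sR k * sH k)) =
          (\<Sum>k<m. complex_of_real (c k) * (\<Sum>i<2*q. \<Sum>j<2*q. kron q (R k) (H k) i j))"
      by (simp add: sR_def sH_def kron_totsum[OF q])
    also have "\<dots> = (\<Sum>i<2*q. \<Sum>j<2*q. \<Sum>k<m. complex_of_real (c k) * kron q (R k) (H k) i j)"
      by (simp add: sum_distrib_left sum.swap[of _ "{..<m}"])
    also have "\<dots> = (\<Sum>i<2*q. \<Sum>j<2*q. \<rho> i j)"
      using eq unfolding mat_eq_def by (intro sum.cong refl) simp
    also have "\<dots> = 0" by (simp add: rowsum)
    finally show ?thesis .
  qed
  have zero: "c k = 0 \<or> sR k = 0 \<or> sH k = 0" if k: "k < m" for k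
  proof -
    have dR: "hermitian_mat 2 (R k)" "psd_mat 2 (R k)" and dH: "hermitian_mat q (H k)" "psd_mat q (H k)"
      using mc k unfolding density_mat_def by auto
    obtain rR where rR: "rR \<ge> 0" "sR k = complex_of_real rR"
      using psd_tot_real[OF dR] unfolding sR_def by blast
    obtain rH where rH: "rH \<ge> 0" "sH k = complex_of_real rH"
      using psd_tot_real[OF dH] unfolding sH_def by blast
    obtain fR where fR: "\<forall>k<m. fR k \<ge> 0 \<and> sR k = complex_of_real (fR k)"
    proof -
      have "\<forall>k<m. \<exists>r. r \<ge> 0 \<and> sR k = complex_of_real r"
      proof (intro allI impI)
        fix k assume "k < m"
        then have "hermitian_mat 2 (R k)" "psd_mat 2 (R k)" using mc unfolding density_mat_def by auto
        then show "\<exists>r. r \<ge> 0 \<and> sR k = complex_of_real r" using psd_tot_real unfolding sR_def by blast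
      qed
      then show ?thesis using that by metis
    qed
    obtain fH where fH: "\<forall>k<m. fH k \<ge> 0 \<and> sH k = complex_of_real (fH k)"
    proof -
      have "\<forall>k<m. \<exists>r. r \<ge> 0 \<and> sH k = complex_of_real r"
      proof (intro allI impI)
        fix k assume "k < m"
        then have "hermitian_mat q (H k)" "psd_mat q (H k)" using mc unfolding density_mat_def by auto
        then show "\<exists>r. r \<ge> 0 \<and> sH k = complex_of_real r" using psd_tot_real unfolding sH_def by blast
      qed
      then show ?thesis using that by metis
    qed
    have "complex_of_real (\<Sum>k<m. c k * (fR k * fH k)) = (\<Sum>k<m. complex_of_real (c k) * (sR k * sH k))"
      unfolding of_real_sum using fR fH by (intro sum.cong refl) simp
    then have "complex_of_real (\<Sum>k<m. c k * (fR k * fH k)) = 0" using tot by (rule trans)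
    then have "(\<Sum>k<m. c k * (fR k * fH k)) = 0" by (simp only: of_real_eq_0_iff)
    moreover have "\<forall>k\<in>{..<m}. 0 \<le> c k * (fR k * fH k)" using mc fR fH by simp
    ultimately have "\<forall>k\<in>{..<m}. c k * (fR k * fH k) = 0"
      using sum_nonneg_eq_0_iff[of "{..<m}" "\<lambda>k. c k * (fR k * fH k)"] by simp
    then have "c k = 0 \<or> fR k = 0 \<or> fH k = 0" using k by simp
    then show ?thesis using fR fH k by auto
  qed
  have PT: "(\<Sum>b'<q. \<rho> b b') + (\<Sum>b'<q. \<rho> (q + b) b') = 0" if b: "b < q" for b
  proof -
    have r1: "\<rho> i b' = (\<Sum>k<m. complex_of_real (c k) * (R k (i div q) 0 * H k (i mod q) b'))"
      if "i < 2*q" "b' < q" for i b'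
    proof -
      have "b' < 2*q" using that by simp
      then have "\<rho> i b' = (\<Sum>k<m. complex_of_real (c k) * kron q (R k) (H k) i b')"
        using eq that unfolding mat_eq_def by blast
      then show ?thesis using that by (simp add: kron_def)
    qed
    have i1: "b < 2*q" "q + b < 2*q" using b by simp_all
    have dm: "b div q = 0" "b mod q = b" "(q + b) div q = 1" "(q + b) mod q = b" using b q by simp_all
    have s1: "(\<Sum>b'<q. \<rho> b b') = (\<Sum>b'<q. \<Sum>k<m. complex_of_real (c k) * (R k 0 0 * H k b b'))"
      using r1[OF i1(1)] dm by (intro sum.cong refl) simp
    have s2: "(\<Sum>b'<q. \<rho> (q + b) b') = (\<Sum>b'<q. \<Sum>k<m. complex_of_real (c k) * (R k 1 0 * H k b b'))"
      using r1[OF i1(2)] dm by (intro sum.cong refl) simp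
    have "(\<Sum>b'<q. \<rho> b b') + (\<Sum>b'<q. \<rho> (q + b) b') =
      (\<Sum>b'<q. \<Sum>k<m. complex_of_real (c k) * ((R k 0 0 + R k 1 0) * H k b b'))"
      unfolding s1 s2 by (simp only: distrib_left distrib_right sum.distrib)
    also have "\<dots> = (\<Sum>k<m. complex_of_real (c k) * (R k 0 0 + R k 1 0) * (\<Sum>b'<q. H k b b'))"
      by (simp add: sum.swap[of _ "{..<m}"] sum_distrib_left mult.assoc)
    also have "\<dots> = 0"
    proof (rule sum.neutral, rule ballI)
      fix k assume "k \<in> {..<m}"
      then have k: "k < m" by simp
      have dR: "hermitian_mat 2 (R k)" "psd_mat 2 (R k)" and dH: "hermitian_mat q (H k)" "psd_mat q (H k)"
        using mc k unfolding density_mat_def by auto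
      consider "c k = 0" | "sR k = 0" | "sH k = 0" using zero[OF k] by blast
      then show "complex_of_real (c k) * (R k 0 0 + R k 1 0) * (\<Sum>b'<q. H k b b') = 0"
      proof cases
        case 1 then show ?thesis by simp
      next
        case 2
        have "\<forall>i<2. (\<Sum>j<2. R k i j) = 0" using psd_kernel[OF dR] 2 unfolding sR_def by blast
        then have "(\<Sum>j<2. R k 0 j) = 0" by simp
        moreover have "(\<Sum>i<2. R k i 0) = cnj (\<Sum>i<2. R k 0 i)" by (rule herm_colsum[OF dR(1)]) simp
        ultimately have "(\<Sum>i<2. R k i 0) = 0" by simp
        then have "R k 0 0 + R k 1 0 = 0" by (simp add: numeral_2_eq_2)
        then show ?thesis by simp
      next
        case 3
        have "\<forall>i<q. (\<Sum>j<q. H k i j) = 0" using psd_kernel[OF dH] 3 unfolding sH_def by blast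
        then show ?thesis using b by simp
      qed
    qed
    finally show ?thesis .
  qed
  show ?thesis unfolding line_sum_symmetric_def
  proof (intro allI impI)
    fix b assume b: "b < q"
    have "(\<Sum>j<2*q. \<rho> b j) = (\<Sum>b'<q. \<rho> b b') + (\<Sum>b'<q. \<rho> b (q + b'))"
      by (rule sum_2q[OF q])
    then have h1: "(\<Sum>b'<q. \<rho> b b') + (\<Sum>b'<q. \<rho> b (q + b')) = 0"
      using rowsum[of b] by (simp only:)
    have "(\<Sum>b'<q. \<rho> b b') + (\<Sum>b'<q. \<rho> b (q + b')) = (\<Sum>b'<q. \<rho> b b') + (\<Sum>b'<q. \<rho> (q + b) b')"
      unfolding h1 PT[OF b] ..
    then have e1: "(\<Sum>b'<q. \<rho> b (q + b')) = (\<Sum>b'<q. \<rho> (q + b) b')"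
      by (simp only: add_left_cancel)
    have l1: "laplacian E b (q + b') = - of_nat (Bm q E (b, b'))" if "b' < q" for b'
      using b that by (simp add: laplacian_def Bm_def)
    have l2: "laplacian E (q + b) b' = - of_nat (Bm q E (b', b))" if "b' < q" for b'
      using b that by (simp add: laplacian_def Bm_def insert_commute)
    have "(\<Sum>b'<q. \<rho> b (q + b')) = - (\<Sum>b'<q. of_nat (Bm q E (b, b'))) / of_nat T"
      unfolding rho by (simp add: l1 sum_divide_distrib sum_negf)
    moreover have "(\<Sum>b'<q. \<rho> (q + b) b') = - (\<Sum>b'<q. of_nat (Bm q E (b', b))) / of_nat T"
      unfolding rho by (simp add: l2 sum_divide_distrib sum_negf)
    ultimately have "(\<Sum>b'<q. (of_nat (Bm q E (b, b')) :: complex)) = (\<Sum>b'<q. of_nat (Bm q E (b', b)))"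
      using e1 Tpos by (simp add: divide_simps)
    then have "(of_nat (\<Sum>b'<q. Bm q E (b, b')) :: complex) = of_nat (\<Sum>b'<q. Bm q E (b', b))"
      by (simp only: of_nat_sum)
    then show "(\<Sum>j<q. Bm q E (b, j)) = (\<Sum>j<q. Bm q E (j, b))" by (simp only: of_nat_eq_iff)
  qed
qed




lemma card_split:
  assumes fin: "finite U" and XU: "X \<subseteq> U" and PX: "\<And>E. P E = P (E \<inter> X)"
  shows "card {E. E \<subseteq> U \<and> P E} = 2 ^ card (U - X) * card {F. F \<subseteq> X \<and> P F}"
proof -
  let ?A = "Pow (U - X) \<times> {F. F \<subseteq> X \<and> P F}"
  let ?B = "{E. E \<subseteq> U \<and> P E}"
  let ?f = "\<lambda>a. fst a \<union> snd a"
  let ?g = "\<lambda>E. (E - X, E \<inter> X)"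
  have l: "\<forall>a\<in>?A. ?g (?f a) = a"
  proof
    fix a assume "a \<in> ?A"
    then have "fst a \<subseteq> U - X" "snd a \<subseteq> X" by auto
    then show "?g (?f a) = a" by (auto simp: prod_eq_iff)
  qed
  have r: "\<forall>E\<in>?B. ?f (?g E) = E" by auto
  have i1: "?f ` ?A \<subseteq> ?B"
  proof
    fix E assume "E \<in> ?f ` ?A"
    then obtain a where a: "a \<in> ?A" "E = fst a \<union> snd a" by blast
    then have s: "fst a \<subseteq> U - X" "snd a \<subseteq> X" "P (snd a)" by auto
    then have "E \<inter> X = snd a" using a(2) by auto
    then have "P E" using PX[of E] s(3) by simp
    moreover have "E \<subseteq> U" using s XU a(2) by auto
    ultimately show "E \<in> ?B" by simp
  qed
  have i2: "?g ` ?B \<subseteq> ?A"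
  proof
    fix a assume "a \<in> ?g ` ?B"
    then obtain E where E: "E \<subseteq> U" "P E" "a = ?g E" by blast
    then have "P (E \<inter> X)" using PX[of E] by simp
    then show "a \<in> ?A" using E by auto
  qed
  have bij: "bij_betw ?f ?A ?B" by (rule bij_betw_byWitness[OF l r i1 i2])
  have "card ?B = card ?A" using bij_betw_same_card[OF bij] by simp
  also have "\<dots> = card (Pow (U - X)) * card {F. F \<subseteq> X \<and> P F}" by (rule card_cartesian_product)
  also have "card (Pow (U - X)) = 2 ^ card (U - X)" using fin by (simp add: card_Pow)
  finally show ?thesis .
qed

lemma all_edges_alt: "all_edges n = {A. A \<subseteq> {..<n} \<and> card A = 2}"
proof
  show "all_edges n \<subseteq> {A. A \<subseteq> {..<n} \<and> card A = 2}"
    unfolding all_edges_def by auto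
next
  show "{A. A \<subseteq> {..<n} \<and> card A = 2} \<subseteq> all_edges n"
  proof
    fix A assume "A \<in> {A. A \<subseteq> {..<n} \<and> card A = 2}"
    then obtain x y where "A = {x, y}" "x \<noteq> y" "A \<subseteq> {..<n}" by (auto simp: card_2_iff)
    then show "A \<in> all_edges n" unfolding all_edges_def by auto
  qed
qed

lemma card_all_edges: "card (all_edges n) = n * (n - 1) div 2"
  unfolding all_edges_alt by (simp add: n_subsets choose_two)

lemma Xq_sub: "Xq q \<subseteq> all_edges (2*q)"
  unfolding Xq_def all_edges_def by fastforce

lemma card_Xq: "card (Xq q) = q * q"
proof -
  let ?f = "\<lambda>a. {fst a, q + snd a}"
  have img: "Xq q = ?f ` ({..<q}\<times>{..<q})" unfolding Xq_def by force
  have inj: "inj_on ?f ({..<q}\<times>{..<q})"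
  proof (rule inj_onI)
    fix a b assume ab: "a \<in> {..<q}\<times>{..<q}" "b \<in> {..<q}\<times>{..<q}" "?f a = ?f b"
    then have lt: "fst a < q" "fst b < q" by auto
    from ab(3) have "(fst a = fst b \<and> q + snd a = q + snd b) \<or> (fst a = q + snd b \<and> q + snd a = fst b)"
      by (simp only: doubleton_eq_iff)
    then have "fst a = fst b \<and> snd a = snd b" using lt by auto
    then show "a = b" by (simp add: prod_eq_iff)
  qed
  show ?thesis unfolding img card_image[OF inj] by (simp add: card_cartesian_product)
qed

lemma card_W: "card (all_edges (2*q) - Xq q) = q * (q - 1)"
proof -
  have "card (all_edges (2*q) - Xq q) = card (all_edges (2*q)) - card (Xq q)"
    by (rule card_Diff_subset[OF finite_subset[OF Xq_sub finite_all_edges] Xq_sub])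
  also have "\<dots> = 2*q*(2*q-1) div 2 - q*q" by (simp add: card_all_edges card_Xq)
  also have "\<dots> = q * (q - 1)"
  proof (cases q)
    case 0 then show ?thesis by simp
  next
    case (Suc r)
    then show ?thesis by (simp add: algebra_simps)
  qed
  finally show ?thesis .
qed

lemma Bm_inter: "Bm q E = Bm q (E \<inter> Xq q)"
  unfolding Bm_def
proof (rule restrict_ext)
  fix x assume "x \<in> {..<q}\<times>{..<q}"
  then obtain b b' where x: "x = (b, b')" "b < q" "b' < q" by auto
  then have "{b, q + b'} \<in> Xq q" unfolding Xq_def by blast
  then show "(case x of (b, b') \<Rightarrow> if {b, q + b'} \<in> E then 1 else 0) =
        (case x of (b, b') \<Rightarrow> if {b, q + b'} \<in> E \<inter> Xq q then 1 else 0)" using x by simp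
qed

lemma card_zom: "card (zero_one_mats q) = 2 ^ (q^2)"
  unfolding zero_one_mats_def by (simp add: card_PiE card_cartesian_product power2_eq_square) (metis numeral_2_eq_2)

lemma Bm_val: "b < q \<Longrightarrow> b' < q \<Longrightarrow> Bm q F (b, b') = (if {b, q + b'} \<in> F then 1 else 0)"
  unfolding Bm_def by simp

lemma Bm_bij: "bij_betw (Bm q) (Pow (Xq q)) (zero_one_mats q)"
proof -
  define g where "g M = {{b, q + b'} | b b'. b < q \<and> b' < q \<and> M (b, b') = 1}" for M :: "nat \<times> nat \<Rightarrow> nat"
  have key: "{b, q + b'} = {c, q + c'} \<Longrightarrow> b = c \<and> b' = c'" if "b < q" "c < q" for b b' c c'
  proof -
    assume "{b, q + b'} = {c, q + c'}"
    then have "(b = c \<and> q + b' = q + c') \<or> (b = q + c' \<and> q + b' = c)" by (simp only: doubleton_eq_iff)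
    then show "b = c \<and> b' = c'" using that by auto
  qed
  have l: "\<forall>F\<in>Pow (Xq q). g (Bm q F) = F"
  proof
    fix F assume F: "F \<in> Pow (Xq q)"
    show "g (Bm q F) = F"
    proof
      show "g (Bm q F) \<subseteq> F"
      proof
        fix e assume "e \<in> g (Bm q F)"
        then obtain b b' where e: "e = {b, q + b'}" "b < q" "b' < q" "Bm q F (b, b') = 1" unfolding g_def by blast
        have "(if {b, q + b'} \<in> F then 1 else 0 :: nat) = 1"
          using e(4) unfolding Bm_val[OF e(2,3), of F] .
        then have "{b, q + b'} \<in> F" by (cases "{b, q + b'} \<in> F") simp_all
        then show "e \<in> F" unfolding e(1) .
      qed
      show "F \<subseteq> g (Bm q F)"
      proof
        fix e assume "e \<in> F"
        then have "e \<in> Xq q" using F by blast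
        then obtain b b' where e: "e = {b, q + b'}" "b < q" "b' < q" unfolding Xq_def by blast
        then have "Bm q F (b, b') = 1" using Bm_val[OF e(2,3), of F] \<open>e \<in> F\<close> by simp
        then show "e \<in> g (Bm q F)" unfolding g_def mem_Collect_eq
          by (intro exI[of _ b] exI[of _ b']) (simp add: e)
      qed
    qed
  qed
  have r: "\<forall>M\<in>zero_one_mats q. Bm q (g M) = M"
  proof
    fix M assume M: "M \<in> zero_one_mats q"
    show "Bm q (g M) = M"
    proof
      fix x
      show "Bm q (g M) x = M x"
      proof (cases "x \<in> {..<q}\<times>{..<q}")
        case True
        then obtain b b' where x: "x = (b, b')" "b < q" "b' < q" by auto
        have Mx: "M x \<in> {0, 1}" using M True unfolding zero_one_mats_def by auto
        have mem: "({b, q + b'} \<in> g M) = (M (b, b') = 1)"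
        proof
          assume "{b, q + b'} \<in> g M"
          then obtain c c' where c: "{b, q + b'} = {c, q + c'}" "c < q" "c' < q" "M (c, c') = 1" unfolding g_def by blast
          then have "b = c \<and> b' = c'" using key[OF x(2) c(2) c(1)] by blast
          then show "M (b, b') = 1" using c(4) by simp
        next
          assume "M (b, b') = 1"
          then show "{b, q + b'} \<in> g M" using x unfolding g_def by blast
        qed
        show ?thesis using Mx mem x Bm_val[OF x(2,3), of "g M"] by auto
      next
        case False
        then have "Bm q (g M) x = undefined" unfolding Bm_def by simp
        moreover have "M x = undefined" using M False unfolding zero_one_mats_def by (rule PiE_arb)
        ultimately show ?thesis by simp
      qed
    qed
  qed
  have i1: "Bm q ` Pow (Xq q) \<subseteq> zero_one_mats q"
  proof
    fix M assume "M \<in> Bm q ` Pow (Xq q)"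
    then obtain F where M: "M = Bm q F" by blast
    show "M \<in> zero_one_mats q"
      unfolding M zero_one_mats_def Bm_def restrict_PiE_iff by (auto split: prod.splits)
  qed
  have i2: "g ` zero_one_mats q \<subseteq> Pow (Xq q)"
  proof
    fix F assume "F \<in> g ` zero_one_mats q"
    then obtain M where F: "F = g M" by blast
    show "F \<in> Pow (Xq q)"
    proof (unfold Pow_iff, rule subsetI)
      fix e assume "e \<in> F"
      then obtain b b' where "e = {b, q + b'}" "b < q" "b' < q" unfolding F g_def by blast
      then show "e \<in> Xq q" unfolding Xq_def by blast
    qed
  qed
  show ?thesis by (rule bij_betw_byWitness[OF l r i1 i2])
qed




lemma bij_betw_restrict_pred:
  assumes "bij_betw f A B"
  shows "bij_betw f {x\<in>A. Q (f x)} {y\<in>B. Q y}"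
proof -
  have inj: "inj_on f {x\<in>A. Q (f x)}"
    using bij_betw_imp_inj_on[OF assms] by (rule inj_on_subset) auto
  have "f ` {x\<in>A. Q (f x)} = {y\<in>B. Q y}"
    using bij_betw_imp_surj_on[OF assms] by blast
  then show ?thesis using inj unfolding bij_betw_def by blast
qed

lemma LSS_empty: "line_sum_symmetric q (Bm q {})"
  unfolding line_sum_symmetric_def by (simp add: Bm_val)

lemma equiv_sep:
  assumes q: "q > 0" and sub: "E \<subseteq> all_edges (2*q)" and ne: "E \<noteq> {}"
  shows "separable 2 q (norm_laplacian (2*q) E) \<longleftrightarrow> line_sum_symmetric q (Bm q E)"
  using suff[OF q sub ne] nec[OF q sub ne] by blast

theorem mainTheorem5:
  fixes q :: nat
  assumes "q \<ge> 1"
  shows "int (L_s 2 q) = 2 ^ (q * (q - 1)) * int (N_s q) - 1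
         \<and> L_e 2 q = 2 ^ (q * (q - 1)) * N_e q"
proof -
  have q: "q > 0" using assms by simp
  define U where "U = all_edges (2*q)"
  define X where "X = Xq q"
  define P where "P F = line_sum_symmetric q (Bm q F)" for F
  have finU: "finite U" unfolding U_def by (rule finite_all_edges)
  have XU: "X \<subseteq> U" unfolding X_def U_def by (rule Xq_sub)
  have PX: "P E = P (E \<inter> X)" for E unfolding P_def X_def using Bm_inter[of q E] by simp
  have nPX: "(\<not> P E) = (\<not> P (E \<inter> X))" for E using PX by simp
  have cW: "card (U - X) = q * (q - 1)" unfolding U_def X_def by (rule card_W)
  have bijP: "bij_betw (Bm q) {F \<in> Pow X. P F} {M \<in> zero_one_mats q. line_sum_symmetric q M}"
    unfolding P_def X_def by (rule bij_betw_restrict_pred[OF Bm_bij])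
  have bijN: "bij_betw (Bm q) {F \<in> Pow X. \<not> P F} {M \<in> zero_one_mats q. \<not> line_sum_symmetric q M}"
    unfolding P_def X_def by (rule bij_betw_restrict_pred[OF Bm_bij])
  have cP: "card {F. F \<subseteq> X \<and> P F} = N_s q"
  proof -
    have "{F. F \<subseteq> X \<and> P F} = {F \<in> Pow X. P F}" by auto
    then show ?thesis using bij_betw_same_card[OF bijP] unfolding N_s_def by simp
  qed
  have finZ: "finite (zero_one_mats q)" using card_zom[of q] card.infinite by force
  have cN: "card {F. F \<subseteq> X \<and> \<not> P F} = 2 ^ (q^2) - N_s q"
  proof -
    have "{F. F \<subseteq> X \<and> \<not> P F} = {F \<in> Pow X. \<not> P F}" by auto
    then have "card {F. F \<subseteq> X \<and> \<not> P F} = card {M \<in> zero_one_mats q. \<not> line_sum_symmetric q M}"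
      using bij_betw_same_card[OF bijN] by simp
    also have "{M \<in> zero_one_mats q. \<not> line_sum_symmetric q M} =
        zero_one_mats q - {M \<in> zero_one_mats q. line_sum_symmetric q M}" by auto
    also have "card \<dots> = card (zero_one_mats q) - card {M \<in> zero_one_mats q. line_sum_symmetric q M}"
      by (rule card_Diff_subset) (auto intro: finite_subset[OF _ finZ])
    finally show ?thesis unfolding N_s_def card_zom .
  qed
  have sets_s: "{E. E \<subseteq> all_edges (2*q) \<and> E \<noteq> {} \<and> separable 2 q (norm_laplacian (2*q) E)} =
      {E. E \<subseteq> U \<and> P E} - {{}}"
    unfolding U_def P_def using equiv_sep[OF q] by blast
  have sets_e: "{E. E \<subseteq> all_edges (2*q) \<and> E \<noteq> {} \<and> \<not> separable 2 q (norm_laplacian (2*q) E)} =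
      {E. E \<subseteq> U \<and> \<not> P E}"
    unfolding U_def P_def using equiv_sep[OF q] LSS_empty[of q] by blast
  have finS: "finite {E. E \<subseteq> U \<and> P E}"
  proof (rule finite_subset)
    show "{E. E \<subseteq> U \<and> P E} \<subseteq> Pow U" by auto
    show "finite (Pow U)" using finU by simp
  qed
  have emp: "{} \<in> {E. E \<subseteq> U \<and> P E}" using LSS_empty[of q] unfolding P_def by simp
  have cS: "card {E. E \<subseteq> U \<and> P E} = 2 ^ (q * (q - 1)) * N_s q"
    using card_split[OF finU XU, of P] PX cP cW by simp
  have cE: "card {E. E \<subseteq> U \<and> \<not> P E} = 2 ^ (q * (q - 1)) * (2 ^ (q^2) - N_s q)"
    using card_split[OF finU XU, of "\<lambda>E. \<not> P E"] nPX cN cW by simp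
  have Ls: "L_s 2 q = 2 ^ (q * (q - 1)) * N_s q - 1"
    unfolding L_s_def sets_s using card_Diff_singleton[OF emp] cS by simp
  have pos: "2 ^ (q * (q - 1)) * N_s q \<ge> 1"
  proof -
    have "card {E. E \<subseteq> U \<and> P E} > 0" using finS emp card_gt_0_iff by blast
    then show ?thesis using cS by simp
  qed
  have Le: "L_e 2 q = 2 ^ (q * (q - 1)) * N_e q"
    unfolding L_e_def sets_e cE N_e_def ..
  show ?thesis using Ls Le pos by (simp add: of_nat_diff)
qed


end
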